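(* Let $|\mathcal{T}|=2$, $|\mathcal{X}|\ge2$, $|\mathcal{Y}|\ge2$, and let $P\in\Delta_{\mathcal{T},\mathcal{X},\mathcal{Y}}$ be such that $\operatorname{supp}(\Delta_P)=\mathcal{T}\times\mathcal{X}\times\mathcal{Y}$. Let $\tilde Q$ lie in the relative interior of $\Delta_P$ with $\tilde Q\in\arg\max_{Q\in\Delta_P}H_Q(T\mid X,Y)$. Then the maximizer is not unique if either $UI(T:X\setminus Y)=0$ and $|\mathcal{Y}|>2$, or $UI(T:Y\setminus X)=0$ and $|\mathcal{X}|>2$.
   Context: $T,X,Y$ are random variables with finite state spaces $\mathcal{T},\mathcal{X},\mathcal{Y}$; $\Delta_{\mathcal{T},\mathcal{X},\mathcal{Y}}$ is the set of all joint distributions on $\mathcal{T}\times\mathcal{X}\times\mathcal{Y}$. For $P\in\Delta_{\mathcal{T},\mathcal{X},\mathcal{Y}}$, $\Delta_P=\{Q\in\Delta_{\mathcal{T},\mathcal{X},\mathcal{Y}}: Q(X=x,T=t)=P(X=x,T=t),\ Q(Y=y,T=t)=P(Y=y,T=t)\ \forall x,y,t\}$ and $\operatorname{supp}(\Delta_P)=\bigcup_{Q\in\Delta_P}\operatorname{supp}(Q)$. $UI(T:X\setminus Y)=\min_{Q\in\Delta_P}I_Q(T:X\mid Y)$ and $UI(T:Y\setminus X)=\min_{Q\in\Delta_P}I_Q(T:Y\mid X)$; $UI(T:X\setminus Y)=0$ holds iff $T$ is conditionally independent of $X$ given $Y$ under some (any) maximizer. *)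

theory Defs
  imports "HOL-Analysis.Analysis"
begin

text \<open>Joint distributions of (T,X,Y) on finite alphabets 't, 'x, 'y are represented
  as vectors in real^('t \<times> 'x \<times> 'y), so that the library notion rel_interior applies.\<close>

type_synonym ('t,'x,'y) jdist = "real ^ ('t \<times> 'x \<times> 'y)"

definition is_dist :: "('t::finite,'x::finite,'y::finite) jdist \<Rightarrow> bool" where
  "is_dist Q \<longleftrightarrow> (\<forall>i. Q $ i \<ge> 0) \<and> (\<Sum>i\<in>UNIV. Q $ i) = 1"

definition mTX :: "('t::finite,'x::finite,'y::finite) jdist \<Rightarrow> 't \<Rightarrow> 'x \<Rightarrow> real" where
  "mTX Q t x = (\<Sum>y\<in>UNIV. Q $ (t,x,y))"

definition mTY :: "('t::finite,'x::finite,'y::finite) jdist \<Rightarrow> 't \<Rightarrow> 'y \<Rightarrow> real" where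
  "mTY Q t y = (\<Sum>x\<in>UNIV. Q $ (t,x,y))"

definition mXY :: "('t::finite,'x::finite,'y::finite) jdist \<Rightarrow> 'x \<Rightarrow> 'y \<Rightarrow> real" where
  "mXY Q x y = (\<Sum>t\<in>UNIV. Q $ (t,x,y))"

definition mX :: "('t::finite,'x::finite,'y::finite) jdist \<Rightarrow> 'x \<Rightarrow> real" where
  "mX Q x = (\<Sum>t\<in>UNIV. \<Sum>y\<in>UNIV. Q $ (t,x,y))"

definition mY :: "('t::finite,'x::finite,'y::finite) jdist \<Rightarrow> 'y \<Rightarrow> real" where
  "mY Q y = (\<Sum>t\<in>UNIV. \<Sum>x\<in>UNIV. Q $ (t,x,y))"

definition DeltaP :: "('t::finite,'x::finite,'y::finite) jdist \<Rightarrow> ('t,'x,'y) jdist set" where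
  "DeltaP P = {Q. is_dist Q \<and> (\<forall>t x. mTX Q t x = mTX P t x) \<and> (\<forall>t y. mTY Q t y = mTY P t y)}"

definition supp_DeltaP :: "('t::finite,'x::finite,'y::finite) jdist \<Rightarrow> ('t \<times> 'x \<times> 'y) set" where
  "supp_DeltaP P = (\<Union>Q\<in>DeltaP P. {i. Q $ i \<noteq> 0})"

definition condH_T_XY :: "('t::finite,'x::finite,'y::finite) jdist \<Rightarrow> real" where
  "condH_T_XY Q = - (\<Sum>(t,x,y)\<in>UNIV.
      if Q $ (t,x,y) = 0 then 0 else Q $ (t,x,y) * ln (Q $ (t,x,y) / mXY Q x y))"

definition condMI_TX_Y :: "('t::finite,'x::finite,'y::finite) jdist \<Rightarrow> real" where
  "condMI_TX_Y Q = (\<Sum>(t,x,y)\<in>UNIV.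
      if Q $ (t,x,y) = 0 then 0
      else Q $ (t,x,y) * ln (Q $ (t,x,y) * mY Q y / (mTY Q t y * mXY Q x y)))"

definition condMI_TY_X :: "('t::finite,'x::finite,'y::finite) jdist \<Rightarrow> real" where
  "condMI_TY_X Q = (\<Sum>(t,x,y)\<in>UNIV.
      if Q $ (t,x,y) = 0 then 0
      else Q $ (t,x,y) * ln (Q $ (t,x,y) * mX Q x / (mTX Q t x * mXY Q x y)))"

text \<open>Unique informations (the minimum over Delta_P, written as an infimum; it is attained).\<close>
definition UI_X :: "('t::finite,'x::finite,'y::finite) jdist \<Rightarrow> real" where
  "UI_X P = Inf (condMI_TX_Y ` DeltaP P)"

definition UI_Y :: "('t::finite,'x::finite,'y::finite) jdist \<Rightarrow> real" where
  "UI_Y P = Inf (condMI_TY_X ` DeltaP P)"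

end

theory Submission
  imports Defs
begin

lemma sum3:
  "(\<Sum>i\<in>(UNIV::('a::finite\<times>'b::finite\<times>'c::finite) set). f i) = (\<Sum>t\<in>UNIV. \<Sum>x\<in>UNIV. \<Sum>y\<in>UNIV. f (t,x,y))"
  by (simp add: UNIV_Times_UNIV[symmetric] sum.cartesian_product' del: UNIV_Times_UNIV)

lemma ln_less_minus_one:
  assumes "(u::real) > 0" "u \<noteq> 1" shows "ln u < u - 1"
proof -
  have s: "sqrt u > 0" "sqrt u \<noteq> 1" using assms by auto
  have "ln u = 2 * ln (sqrt u)" using assms by (simp add: ln_sqrt)
  also have "\<dots> \<le> 2 * (sqrt u - 1)" using ln_le_minus_one[OF s(1)] by simp
  also have "\<dots> < u - 1"
  proof -
    have "(sqrt u - 1)^2 > 0" using s by simp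
    moreover have "(sqrt u - 1)^2 = sqrt u * sqrt u - 2 * sqrt u + 1" by (simp add: power2_eq_square algebra_simps)
    moreover have "sqrt u * sqrt u = u" using assms by simp
    ultimately show ?thesis by (smt (verit))
  qed
  finally show ?thesis .
qed

lemma posmarg:
  fixes Q :: "('t::finite,'x::finite,'y::finite) jdist"
  assumes "is_dist Q" "Q$(t,x,y) > 0"
  shows "mXY Q x y > 0" "mTY Q t y > 0" "mY Q y > 0" "mTX Q t x > 0" "mX Q x > 0"
    "mXY Q x y \<ge> Q$(t,x,y)" "mTY Q t y \<ge> Q$(t,x,y)" "mY Q y \<ge> mTY Q t y" "mX Q x \<ge> mTX Q t x"
proof -
  have nn: "\<And>i. Q$i \<ge> 0" using assms(1) unfolding is_dist_def by blast
  show 1: "mXY Q x y \<ge> Q$(t,x,y)" unfolding mXY_def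
    by (rule member_le_sum[where f="\<lambda>t. Q$(t,x,y)"]) (auto simp: nn)
  show 2: "mTY Q t y \<ge> Q$(t,x,y)" unfolding mTY_def
    by (rule member_le_sum[where f="\<lambda>x. Q$(t,x,y)"]) (auto simp: nn)
  have 3: "mTX Q t x \<ge> Q$(t,x,y)" unfolding mTX_def
    by (rule member_le_sum[where f="\<lambda>y. Q$(t,x,y)"]) (auto simp: nn)
  show 4: "mY Q y \<ge> mTY Q t y" unfolding mY_def mTY_def
    by (rule member_le_sum[where f="\<lambda>t. \<Sum>x\<in>UNIV. Q$(t,x,y)"]) (auto simp: nn sum_nonneg)
  show 5: "mX Q x \<ge> mTX Q t x" unfolding mX_def mTX_def
    by (rule member_le_sum[where f="\<lambda>t. \<Sum>y\<in>UNIV. Q$(t,x,y)"]) (auto simp: nn sum_nonneg)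
  show "mXY Q x y > 0" "mTY Q t y > 0" "mY Q y > 0" "mTX Q t x > 0" "mX Q x > 0"
    using 1 2 3 4 5 assms(2) by linarith+
qed

lemma mY_eq: "mY Q y = (\<Sum>t\<in>UNIV. mTY Q t y)"
  by (simp add: mY_def mTY_def)

lemma mY_eq2: "mY Q y = (\<Sum>x\<in>UNIV. mXY Q x y)"
  unfolding mY_def mXY_def by (rule sum.swap)

lemma identA:
  fixes Q :: "('t::finite,'x::finite,'y::finite) jdist"
  assumes d: "is_dist Q"
  shows "condH_T_XY Q + condMI_TX_Y Q = (\<Sum>t\<in>UNIV. \<Sum>y\<in>UNIV. mTY Q t y * ln (mY Q y / mTY Q t y))"
proof -
  have nn: "\<And>i. Q$i \<ge> 0" using d unfolding is_dist_def by blast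
  have trm: "(if Q$(t,x,y) = 0 then 0 else Q$(t,x,y) * ln (Q$(t,x,y) * mY Q y / (mTY Q t y * mXY Q x y)))
     - (if Q$(t,x,y) = 0 then 0 else Q$(t,x,y) * ln (Q$(t,x,y) / mXY Q x y))
     = Q$(t,x,y) * ln (mY Q y / mTY Q t y)" for t x y
  proof (cases "Q$(t,x,y) = 0")
    case True then show ?thesis by simp
  next
    case False
    then have q: "Q$(t,x,y) > 0" using nn[of "(t,x,y)"] by linarith
    note p = posmarg[OF d q]
    have "ln (Q$(t,x,y) * mY Q y / (mTY Q t y * mXY Q x y)) - ln (Q$(t,x,y) / mXY Q x y)
          = ln (mY Q y / mTY Q t y)"
      using q p by (simp add: ln_div ln_mult)
    then show ?thesis using False by (simp add: algebra_simps)
  qed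
  define F where "F t x y = (if Q$(t,x,y) = 0 then 0 else Q$(t,x,y) * ln (Q$(t,x,y) / mXY Q x y))" for t x y
  define G where "G t x y = (if Q$(t,x,y) = 0 then 0 else Q$(t,x,y) * ln (Q$(t,x,y) * mY Q y / (mTY Q t y * mXY Q x y)))" for t x y
  have e1: "condH_T_XY Q = - (\<Sum>t\<in>UNIV. \<Sum>x\<in>UNIV. \<Sum>y\<in>UNIV. F t x y)"
    unfolding condH_T_XY_def sum3 F_def by (simp cong: if_cong)
  have e2: "condMI_TX_Y Q = (\<Sum>t\<in>UNIV. \<Sum>x\<in>UNIV. \<Sum>y\<in>UNIV. G t x y)"
    unfolding condMI_TX_Y_def sum3 G_def by simp
  have "condH_T_XY Q + condMI_TX_Y Q = (\<Sum>t\<in>UNIV. \<Sum>x\<in>UNIV. \<Sum>y\<in>UNIV. G t x y - F t x y)"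
    unfolding e1 e2 by (simp add: sum_subtractf)
  also have "\<dots> = (\<Sum>t\<in>UNIV. \<Sum>x\<in>UNIV. \<Sum>y\<in>UNIV. Q$(t,x,y) * ln (mY Q y / mTY Q t y))"
    unfolding F_def G_def trm by simp
  also have "\<dots> = (\<Sum>t\<in>UNIV. \<Sum>y\<in>UNIV. \<Sum>x\<in>UNIV. Q$(t,x,y) * ln (mY Q y / mTY Q t y))"
    by (rule sum.cong[OF refl], rule sum.swap)
  also have "\<dots> = (\<Sum>t\<in>UNIV. \<Sum>y\<in>UNIV. mTY Q t y * ln (mY Q y / mTY Q t y))"
    by (simp add: mTY_def sum_distrib_right)
  finally show ?thesis .
qed

lemma sumQ: "is_dist Q \<Longrightarrow> (\<Sum>t\<in>UNIV. \<Sum>x\<in>UNIV. \<Sum>y\<in>UNIV. Q$(t,x,y)) = 1"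
  unfolding is_dist_def sum3 by simp

lemma sum_mTY: "is_dist Q \<Longrightarrow> (\<Sum>t\<in>UNIV. \<Sum>y\<in>UNIV. mTY Q t y) = 1"
  unfolding mTY_def
  by (subst sumQ[symmetric], assumption, rule sum.cong[OF refl], rule sum.swap)

lemma sum_mTX: "is_dist Q \<Longrightarrow> (\<Sum>t\<in>UNIV. \<Sum>x\<in>UNIV. mTX Q t x) = 1"
  unfolding mTX_def by (rule sumQ)

lemma gibbsA:
  fixes Q :: "('t::finite,'x::finite,'y::finite) jdist"
  assumes d: "is_dist Q" and pos: "\<forall>i. Q$i > 0" and mi: "condMI_TX_Y Q = 0"
  shows "Q$(t,x,y) = mTY Q t y * mXY Q x y / mY Q y"
proof (rule ccontr)
  assume ne: "Q$(t,x,y) \<noteq> mTY Q t y * mXY Q x y / mY Q y"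
  define q' where "q' t x y = mTY Q t y * mXY Q x y / mY Q y" for t x y
  have q'pos: "q' t x y > 0" for t x y
    using posmarg[OF d pos[rule_format, of "(t,x,y)"]] by (simp add: q'_def)
  define L where "L i = (case i of (t,x,y) \<Rightarrow> Q$(t,x,y) * ln (q' t x y / Q$(t,x,y)))" for i
  define R where "R i = (case i of (t,x,y) \<Rightarrow> q' t x y - Q$(t,x,y))" for i
  have le: "L i \<le> R i" for i
  proof -
    obtain t x y where i: "i = (t,x,y)" by (cases i) auto
    have q: "Q$(t,x,y) > 0" using pos by simp
    have "ln (q' t x y / Q$(t,x,y)) \<le> q' t x y / Q$(t,x,y) - 1"
      using q q'pos[of t x y] by (intro ln_le_minus_one) simp
    then have "Q$(t,x,y) * ln (q' t x y / Q$(t,x,y)) \<le> Q$(t,x,y) * (q' t x y / Q$(t,x,y) - 1)"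
      using q by (simp add: mult_left_mono)
    also have "\<dots> = q' t x y - Q$(t,x,y)" using q by (simp add: field_simps)
    finally show ?thesis by (simp add: i L_def R_def)
  qed
  have lt: "L (t,x,y) < R (t,x,y)"
  proof -
    have q: "Q$(t,x,y) > 0" using pos by simp
    have "q' t x y \<noteq> Q$(t,x,y)" using ne by (simp add: q'_def)
    then have "q' t x y / Q$(t,x,y) \<noteq> 1" using q by simp
    then have "ln (q' t x y / Q$(t,x,y)) < q' t x y / Q$(t,x,y) - 1"
      using q q'pos[of t x y] by (intro ln_less_minus_one) simp_all
    then have "Q$(t,x,y) * ln (q' t x y / Q$(t,x,y)) < Q$(t,x,y) * (q' t x y / Q$(t,x,y) - 1)"
      using q by (simp add: mult_strict_left_mono)
    also have "\<dots> = q' t x y - Q$(t,x,y)" using q by (simp add: field_simps)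
    finally show ?thesis by (simp add: L_def R_def)
  qed
  have "sum L UNIV < sum R UNIV"
    by (rule sum_strict_mono_ex1) (use le lt in auto)
  moreover have "sum L UNIV = - condMI_TX_Y Q"
  proof -
    have "L i = - (case i of (t,x,y) \<Rightarrow> if Q$(t,x,y) = 0 then 0
      else Q$(t,x,y) * ln (Q$(t,x,y) * mY Q y / (mTY Q t y * mXY Q x y)))" for i
    proof -
      obtain t x y where i: "i = (t,x,y)" by (cases i) auto
      have q: "Q$(t,x,y) > 0" using pos by simp
      note p = posmarg[OF d q]
      have "ln (q' t x y / Q$(t,x,y)) = - ln (Q$(t,x,y) * mY Q y / (mTY Q t y * mXY Q x y))"
        using q p by (simp add: q'_def ln_div ln_mult)
      then show ?thesis using q by (simp add: i L_def)
    qed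
    then show ?thesis unfolding condMI_TX_Y_def by (simp add: sum_negf)
  qed
  moreover have "sum R UNIV = 0"
  proof -
    have "sum R UNIV = (\<Sum>t\<in>UNIV. \<Sum>x\<in>UNIV. \<Sum>y\<in>UNIV. q' t x y) - (\<Sum>t\<in>UNIV. \<Sum>x\<in>UNIV. \<Sum>y\<in>UNIV. Q$(t,x,y))"
      unfolding sum3 R_def by (simp add: sum_subtractf)
    also have "(\<Sum>t\<in>UNIV. \<Sum>x\<in>UNIV. \<Sum>y\<in>UNIV. q' t x y) = (\<Sum>t\<in>UNIV. \<Sum>y\<in>UNIV. \<Sum>x\<in>UNIV. q' t x y)"
      by (rule sum.cong[OF refl], rule sum.swap)
    also have "\<dots> = (\<Sum>t\<in>UNIV. \<Sum>y\<in>UNIV. mTY Q t y)"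
    proof (rule sum.cong[OF refl], rule sum.cong[OF refl])
      fix t y
      have "mY Q y > 0" using posmarg(3)[OF d, of t x y] pos by simp
      then show "(\<Sum>x\<in>UNIV. q' t x y) = mTY Q t y"
        unfolding q'_def by (simp add: sum_divide_distrib[symmetric] sum_distrib_left[symmetric] mY_eq2[symmetric])
    qed
    finally show ?thesis using sum_mTY[OF d] sumQ[OF d] by simp
  qed
  ultimately show False using mi by simp
qed

lemma condH_form:
  fixes Q :: "('t::finite,'x::finite,'y::finite) jdist"
  assumes d: "is_dist Q" and pos: "\<forall>i. Q$i > 0" and ci: "\<And>t x y. Q$(t,x,y) = a t y * mXY Q x y"
  shows "condH_T_XY Q = - (\<Sum>t\<in>UNIV. \<Sum>y\<in>UNIV. mTY Q t y * ln (a t y))"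
proof -
  have trm: "(if Q$(t,x,y) = 0 then 0 else Q$(t,x,y) * ln (Q$(t,x,y) / mXY Q x y)) = Q$(t,x,y) * ln (a t y)" for t x y
  proof -
    have q: "Q$(t,x,y) > 0" using pos by simp
    have "mXY Q x y > 0" using posmarg(1)[OF d q] .
    then have "Q$(t,x,y) / mXY Q x y = a t y" using ci[of t x y] by simp
    then show ?thesis using q by simp
  qed
  have "condH_T_XY Q = - (\<Sum>t\<in>UNIV. \<Sum>x\<in>UNIV. \<Sum>y\<in>UNIV. Q$(t,x,y) * ln (a t y))"
    unfolding condH_T_XY_def sum3 by (simp add: trm)
  also have "(\<Sum>t\<in>UNIV. \<Sum>x\<in>UNIV. \<Sum>y\<in>UNIV. Q$(t,x,y) * ln (a t y)) = (\<Sum>t\<in>UNIV. \<Sum>y\<in>UNIV. \<Sum>x\<in>UNIV. Q$(t,x,y) * ln (a t y))"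
    by (rule sum.cong[OF refl], rule sum.swap)
  also have "\<dots> = (\<Sum>t\<in>UNIV. \<Sum>y\<in>UNIV. mTY Q t y * ln (a t y))"
    by (simp add: mTY_def sum_distrib_right)
  finally show ?thesis .
qed

lemma two_elems: "CARD('a::finite) \<ge> 2 \<Longrightarrow> \<exists>a b::'a. a \<noteq> b"
proof (rule ccontr)
  assume "CARD('a) \<ge> 2" "\<not> (\<exists>a b::'a. a \<noteq> b)"
  then have "CARD('a) \<le> Suc 0" by (subst card_le_Suc0_iff_eq) auto
  then show False using \<open>CARD('a) \<ge> 2\<close> by simp
qed

lemma three_elems: "CARD('a::finite) > 2 \<Longrightarrow> \<exists>a b c::'a. a \<noteq> b \<and> a \<noteq> c \<and> b \<noteq> c"
proof (rule ccontr)
  assume c: "CARD('a) > 2" and n: "\<not> (\<exists>a b c::'a. a \<noteq> b \<and> a \<noteq> c \<and> b \<noteq> c)"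
  obtain a b :: 'a where ab: "a \<noteq> b" using two_elems[of] c by (metis less_imp_le)
  then have "(UNIV::'a set) = {a,b}" using n by auto
  then have "CARD('a) \<le> 2" by (metis card_2_iff ab order_refl)
  then show False using c by simp
qed

lemma exists_v:
  fixes b :: "'y::finite \<Rightarrow> real" and y1 y2 y3 :: 'y
  assumes "y1 \<noteq> y2" "y1 \<noteq> y3" "y2 \<noteq> y3"
  shows "\<exists>v. (\<Sum>y\<in>UNIV. v y) = 0 \<and> (\<Sum>y\<in>UNIV. b y * v y) = 0 \<and> (\<exists>y0. v y0 \<noteq> 0)"
proof -
  have key: "\<exists>v. (\<Sum>y\<in>UNIV. v y) = 0 \<and> (\<Sum>y\<in>UNIV. b y * v y) = 0 \<and> (\<exists>y0. v y0 \<noteq> 0)"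
    if "c1 + c2 + c3 = 0" "b y1 * c1 + b y2 * c2 + b y3 * c3 = 0" "c1 \<noteq> 0 \<or> c3 \<noteq> 0" for c1 c2 c3
  proof -
    define v where "v y = (if y = y1 then c1 else 0) + (if y = y2 then c2 else 0) + (if y = y3 then c3 else 0)" for y
    have s1: "(\<Sum>y\<in>UNIV. v y) = c1 + c2 + c3"
      unfolding v_def by (simp add: sum.distrib)
    have s2: "(\<Sum>y\<in>UNIV. b y * v y) = b y1 * c1 + b y2 * c2 + b y3 * c3"
    proof -
      have "b y * v y = (if y = y1 then b y1 * c1 else 0) + (if y = y2 then b y2 * c2 else 0) + (if y = y3 then b y3 * c3 else 0)" for y
        by (simp add: v_def distrib_left)
      then show ?thesis by (simp add: sum.distrib)
    qed
    have "v y1 = c1" "v y3 = c3" using assms by (simp_all add: v_def)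
    then show ?thesis using s1 s2 that by metis
  qed
  show ?thesis
  proof (cases "b y1 = b y2")
    case True
    then show ?thesis using key[of 1 "-1" 0] by (simp add: algebra_simps)
  next
    case False
    then show ?thesis using key[of "b y3 - b y2" "b y1 - b y3" "b y2 - b y1"] by (simp add: algebra_simps)
  qed
qed

lemma coreA:
  fixes P Qt :: "('t::finite,'x::finite,'y::finite) jdist"
  assumes card_t: "CARD('t) = 2" and cx: "CARD('x) \<ge> 2" and cy: "CARD('y) > 2"
    and QtD: "Qt \<in> DeltaP P" and pos: "\<forall>i. Qt$i > 0"
    and max: "\<forall>Q\<in>DeltaP P. condH_T_XY Q \<le> condH_T_XY Qt"
    and ui: "UI_X P = 0"
  shows "\<exists>Q\<in>DeltaP P. Q \<noteq> Qt \<and> condH_T_XY Q = condH_T_XY Qt"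
proof -
  have dQt: "is_dist Qt" using QtD by (simp add: DeltaP_def)
  have margY: "mY Q y = mY P y" if "Q \<in> DeltaP P" for Q y
    using that by (simp add: DeltaP_def mY_eq)
  define K where "K = (\<Sum>t\<in>UNIV. \<Sum>y\<in>UNIV. mTY P t y * ln (mY P y / mTY P t y))"
  have idQ: "condH_T_XY Q + condMI_TX_Y Q = K" if "Q \<in> DeltaP P" for Q
  proof -
    have "is_dist Q" using that by (simp add: DeltaP_def)
    from identA[OF this] show ?thesis using that margY[OF that] by (simp add: K_def DeltaP_def)
  qed
  have "UI_X P = condMI_TX_Y Qt" unfolding UI_X_def
  proof (rule cInf_eq_minimum)
    show "condMI_TX_Y Qt \<in> condMI_TX_Y ` DeltaP P" using QtD by simp
    fix m assume "m \<in> condMI_TX_Y ` DeltaP P"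
    then obtain Q where Q: "Q \<in> DeltaP P" "m = condMI_TX_Y Q" by auto
    show "condMI_TX_Y Qt \<le> m" using idQ[OF Q(1)] idQ[OF QtD] max Q by force
  qed
  then have mi0: "condMI_TX_Y Qt = 0" using ui by simp
  define a where "a t y = mTY Qt t y / mY Qt y" for t y
  have ci: "Qt$(t,x,y) = a t y * mXY Qt x y" for t x y
    using gibbsA[OF dQt pos mi0, of t x y] by (simp add: a_def)
  have apos: "a t y > 0" for t y
  proof -
    obtain x :: 'x where True by simp
    show ?thesis using posmarg[OF dQt pos[rule_format, of "(t,x,y)"]] by (simp add: a_def)
  qed
  have ale1: "a t y \<le> 1" for t y
  proof -
    obtain x :: 'x where True by simp
    show ?thesis using posmarg[OF dQt pos[rule_format, of "(t,x,y)"]] by (simp add: a_def)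
  qed
  have asumU: "(\<Sum>t\<in>UNIV. a t y) = 1" for y
  proof -
    obtain x :: 'x and t :: 't where True by simp
    have "mY Qt y > 0" using posmarg(3)[OF dQt pos[rule_format, of "(t,x,y)"]] .
    then show ?thesis unfolding a_def by (simp add: sum_divide_distrib[symmetric] mY_eq[symmetric])
  qed
  obtain t0 t1 :: 't where U: "(UNIV::'t set) = {t0,t1}" and t01: "t0 \<noteq> t1"
    using card_t card_2_iff by metis
  have a01: "a t0 y = 1 - a t1 y" for y using asumU[of y] by (simp add: U t01)
  obtain x1 x2 :: 'x where x12: "x1 \<noteq> x2" using two_elems[OF cx] by blast
  obtain y1 y2 y3 :: 'y where y123: "y1 \<noteq> y2" "y1 \<noteq> y3" "y2 \<noteq> y3" using three_elems[OF cy] by blast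
  obtain v where v0: "(\<Sum>y\<in>UNIV. v y) = 0" and vb: "(\<Sum>y\<in>UNIV. a t1 y * v y) = 0"
    and vnz: "\<exists>y0. v y0 \<noteq> 0"
    using exists_v[OF y123, of "a t1"] by blast
  obtain y0 where y0: "v y0 \<noteq> 0" using vnz by blast
  have va: "(\<Sum>y\<in>UNIV. a t y * v y) = 0" for t
  proof -
    have "t = t0 \<or> t = t1" using U by auto
    moreover have "(\<Sum>y\<in>UNIV. a t0 y * v y) = 0"
      using v0 vb by (simp add: a01 algebra_simps sum_subtractf)
    ultimately show ?thesis using vb by auto
  qed
  define r where "r x y = (if x = x1 then v y else if x = x2 then - v y else 0)" for x y
  have rsum: "(\<Sum>x\<in>UNIV. r x y) = 0" for y
  proof -
    have "r x y = (if x = x1 then v y else 0) + (if x = x2 then - v y else 0)" for x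
      using x12 by (simp add: r_def)
    then show ?thesis by (simp add: sum.distrib)
  qed
  have ra: "(\<Sum>y\<in>UNIV. a t y * r x y) = 0" for t x
    using va[of t] x12 by (cases "x = x1"; cases "x = x2") (simp_all add: r_def sum_negf)
  define V where "V = (\<Sum>y\<in>UNIV. \<bar>v y\<bar>)"
  have V0: "V \<ge> 0" unfolding V_def by (simp add: sum_nonneg)
  have rV: "\<bar>r x y\<bar> \<le> V" for x y
  proof -
    have "\<bar>v y\<bar> \<le> V" unfolding V_def by (rule member_le_sum) auto
    then show ?thesis using V0 by (simp add: r_def)
  qed
  define m where "m = Min (range (\<lambda>i. Qt$i))"
  have mle: "m \<le> Qt$i" for i unfolding m_def by (rule Min_le) auto
  have mpos: "m > 0"
  proof -
    have "m \<in> range (\<lambda>i. Qt$i)" unfolding m_def by (rule Min_in) auto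
    then show ?thesis using pos by auto
  qed
  define e where "e = m / (2 * (V + 1))"
  have epos: "e > 0" using mpos V0 by (simp add: e_def)
  have eV: "e * V < m"
  proof -
    have "e * V = m * (V / (2 * (V + 1)))" by (simp add: e_def)
    also have "\<dots> < m * 1" using mpos V0 by (intro mult_strict_left_mono) (simp_all add: field_simps)
    finally show ?thesis by simp
  qed
  define Q :: "('t,'x,'y) jdist" where "Q = (\<chi> i. case i of (t,x,y) \<Rightarrow> Qt$(t,x,y) + e * (a t y * r x y))"
  have Qc: "Q$(t,x,y) = Qt$(t,x,y) + e * (a t y * r x y)" for t x y by (simp add: Q_def)
  have Qpos: "Q$i > 0" for i
  proof -
    obtain t x y where i: "i = (t,x,y)" by (cases i) auto
    have "\<bar>e * (a t y * r x y)\<bar> = e * (a t y * \<bar>r x y\<bar>)"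
      using epos apos[of t y] by (simp add: abs_mult)
    also have "\<dots> \<le> e * (1 * V)"
      using epos apos[of t y] ale1[of t y] rV[of x y] V0
      by (intro mult_left_mono mult_mono) simp_all
    finally have "\<bar>e * (a t y * r x y)\<bar> < Qt$(t,x,y)" using eV mle[of "(t,x,y)"] by simp
    then show ?thesis using i Qc by simp
  qed
  have mTYQ: "mTY Q t y = mTY Qt t y" for t y
  proof -
    have "mTY Q t y = mTY Qt t y + e * a t y * (\<Sum>x\<in>UNIV. r x y)"
      by (simp add: mTY_def Qc sum.distrib sum_distrib_left algebra_simps)
    then show ?thesis using rsum by simp
  qed
  have mTXQ: "mTX Q t x = mTX Qt t x" for t x
  proof -
    have "mTX Q t x = mTX Qt t x + e * (\<Sum>y\<in>UNIV. a t y * r x y)"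
      by (simp add: mTX_def Qc sum.distrib sum_distrib_left)
    then show ?thesis using ra by simp
  qed
  have dQ: "is_dist Q"
  proof -
    have "(\<Sum>i\<in>UNIV. Q$i) = 1"
      using sum_mTX[OF dQt] unfolding sum3 by (simp add: mTX_def[symmetric] mTXQ)
    then show ?thesis using Qpos by (simp add: is_dist_def less_imp_le)
  qed
  have QD: "Q \<in> DeltaP P" using QtD dQ by (simp add: DeltaP_def mTXQ mTYQ)
  have Qne: "Q \<noteq> Qt"
  proof
    assume "Q = Qt"
    then have "e * (a t1 y0 * r x1 y0) = 0" using Qc[of t1 x1 y0] by simp
    then show False using epos apos[of t1 y0] y0 by (simp add: r_def)
  qed
  have mXYQ: "mXY Q x y = mXY Qt x y + e * r x y" for x y
  proof -
    have "mXY Q x y = mXY Qt x y + e * r x y * (\<Sum>t\<in>UNIV. a t y)"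
      by (simp add: mXY_def Qc sum.distrib sum_distrib_left sum_distrib_right algebra_simps)
    then show ?thesis using asumU by simp
  qed
  have ciQ: "Q$(t,x,y) = a t y * mXY Q x y" for t x y
    by (simp add: Qc mXYQ ci algebra_simps)
  have "condH_T_XY Q = condH_T_XY Qt"
    using condH_form[OF dQ, of a] condH_form[OF dQt pos, of a] Qpos ci ciQ by (simp add: mTYQ)
  then show ?thesis using QD Qne by blast
qed

definition sw :: "('t::finite,'x::finite,'y::finite) jdist \<Rightarrow> ('t,'y,'x) jdist" where
  "sw Q = (\<chi> i. case i of (t,y,x) \<Rightarrow> Q$(t,x,y))"

lemma sw_nth[simp]: "sw Q $ (t,y,x) = Q$(t,x,y)"
  by (simp add: sw_def)

lemma sw_sw[simp]: "sw (sw Q) = Q"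
  by (auto simp: vec_eq_iff sw_def split: prod.splits)

lemma sw_marg[simp]:
  "mTX (sw Q) t y = mTY Q t y" "mTY (sw Q) t x = mTX Q t x" "mXY (sw Q) y x = mXY Q x y"
  "mX (sw Q) y = mY Q y" "mY (sw Q) x = mX Q x"
  by (simp_all add: mTX_def mTY_def mXY_def mX_def mY_def)

lemma sw_dist[simp]: "is_dist (sw Q) \<longleftrightarrow> is_dist Q"
proof -
  have a: "(\<forall>i. sw Q $ i \<ge> 0) \<longleftrightarrow> (\<forall>i. Q $ i \<ge> 0)" by auto
  have b: "(\<Sum>i\<in>UNIV. sw Q $ i) = (\<Sum>i\<in>UNIV. Q $ i)"
    unfolding sum3 by (simp, rule sum.cong[OF refl], rule sum.swap)
  show ?thesis unfolding is_dist_def a b ..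
qed

lemma sw_condH[simp]: "condH_T_XY (sw Q) = condH_T_XY Q"
proof -
  define F where "F t x y = (if Q$(t,x,y) = 0 then 0 else Q$(t,x,y) * ln (Q$(t,x,y) / mXY Q x y))" for t x y
  have 1: "condH_T_XY (sw Q) = - (\<Sum>t\<in>UNIV. \<Sum>y\<in>UNIV. \<Sum>x\<in>UNIV. F t x y)"
    unfolding condH_T_XY_def sum3 F_def by (simp cong: if_cong)
  have 2: "condH_T_XY Q = - (\<Sum>t\<in>UNIV. \<Sum>x\<in>UNIV. \<Sum>y\<in>UNIV. F t x y)"
    unfolding condH_T_XY_def sum3 F_def by (simp cong: if_cong)
  have "(\<Sum>t\<in>UNIV. \<Sum>y\<in>UNIV. \<Sum>x\<in>UNIV. F t x y) = (\<Sum>t\<in>UNIV. \<Sum>x\<in>UNIV. \<Sum>y\<in>UNIV. F t x y)"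
    by (rule sum.cong[OF refl], rule sum.swap)
  then show ?thesis unfolding 1 2 by simp
qed

lemma sw_condMI[simp]: "condMI_TX_Y (sw Q) = condMI_TY_X Q"
proof -
  define F where "F t x y = (if Q$(t,x,y) = 0 then 0 else Q$(t,x,y) * ln (Q$(t,x,y) * mX Q x / (mTX Q t x * mXY Q x y)))" for t x y
  have 1: "condMI_TX_Y (sw Q) = (\<Sum>t\<in>UNIV. \<Sum>y\<in>UNIV. \<Sum>x\<in>UNIV. F t x y)"
    unfolding condMI_TX_Y_def sum3 F_def by (simp cong: if_cong)
  have 2: "condMI_TY_X Q = (\<Sum>t\<in>UNIV. \<Sum>x\<in>UNIV. \<Sum>y\<in>UNIV. F t x y)"
    unfolding condMI_TY_X_def sum3 F_def by simp
  have "(\<Sum>t\<in>UNIV. \<Sum>y\<in>UNIV. \<Sum>x\<in>UNIV. F t x y) = (\<Sum>t\<in>UNIV. \<Sum>x\<in>UNIV. \<Sum>y\<in>UNIV. F t x y)"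
    by (rule sum.cong[OF refl], rule sum.swap)
  then show ?thesis unfolding 1 2 by simp
qed

lemma sw_DeltaP: "sw Q \<in> DeltaP (sw P) \<longleftrightarrow> Q \<in> DeltaP P"
  by (auto simp: DeltaP_def)

lemma DeltaP_sw_image: "DeltaP (sw P) = sw ` DeltaP P"
proof
  show "sw ` DeltaP P \<subseteq> DeltaP (sw P)" using sw_DeltaP by auto
  show "DeltaP (sw P) \<subseteq> sw ` DeltaP P"
  proof
    fix Q assume "Q \<in> DeltaP (sw P)"
    then have "sw (sw Q) \<in> DeltaP (sw P)" by simp
    then have "sw Q \<in> DeltaP P" using sw_DeltaP by blast
    then show "Q \<in> sw ` DeltaP P" by (metis image_eqI sw_sw)
  qed
qed

lemma UI_sw: "UI_X (sw P) = UI_Y P"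
  unfolding UI_X_def UI_Y_def DeltaP_sw_image image_image by simp

lemma convex_DeltaP:
  fixes P :: "('t::finite,'x::finite,'y::finite) jdist"
  shows "convex (DeltaP P)"
  unfolding convex_def
proof (intro ballI allI impI)
  fix Q1 Q2 :: "('t,'x,'y) jdist" and u v :: real
  assume Q: "Q1 \<in> DeltaP P" "Q2 \<in> DeltaP P" and uv: "0 \<le> u" "0 \<le> v" "u + v = 1"
  let ?R = "u *\<^sub>R Q1 + v *\<^sub>R Q2"
  have d1: "is_dist Q1" and d2: "is_dist Q2" using Q by (simp_all add: DeltaP_def)
  have nn: "?R $ i \<ge> 0" for i
    using d1 d2 uv unfolding is_dist_def by (cases i) (auto intro!: add_nonneg_nonneg mult_nonneg_nonneg)
  have s: "(\<Sum>i\<in>UNIV. ?R $ i) = 1"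
    using d1 d2 uv unfolding is_dist_def by (simp add: sum.distrib sum_distrib_left[symmetric])
  have "mTX ?R t x = u * mTX Q1 t x + v * mTX Q2 t x" for t x
    by (simp add: mTX_def sum.distrib sum_distrib_left)
  moreover have "mTY ?R t y = u * mTY Q1 t y + v * mTY Q2 t y" for t y
    by (simp add: mTY_def sum.distrib sum_distrib_left)
  ultimately show "?R \<in> DeltaP P"
    using Q uv nn s by (simp add: DeltaP_def is_dist_def algebra_simps flip: distrib_right)
qed

lemma full_support:
  fixes P Qt :: "('t::finite,'x::finite,'y::finite) jdist"
  assumes "supp_DeltaP P = UNIV" "Qt \<in> rel_interior (DeltaP P)"
  shows "Qt$i > 0"
proof -
  have QtD: "Qt \<in> DeltaP P" using assms(2) rel_interior_subset by blast
  obtain Q where Q: "Q \<in> DeltaP P" "Q$i \<noteq> 0"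
    using assms(1) unfolding supp_DeltaP_def by blast
  have "Q$i \<ge> 0" using Q(1) unfolding DeltaP_def is_dist_def by blast
  then have qi: "Q$i > 0" using Q(2) by simp
  obtain e where e: "e > 1" "(1 - e) *\<^sub>R Q + e *\<^sub>R Qt \<in> DeltaP P"
    using convex_rel_interior_iff[OF convex_DeltaP, of P Qt] assms(2) QtD Q(1) by blast
  have "((1 - e) *\<^sub>R Q + e *\<^sub>R Qt) $ i \<ge> 0"
    using e(2) unfolding DeltaP_def is_dist_def by blast
  then have "(1 - e) * Q$i + e * Qt$i \<ge> 0" by simp
  moreover have "(e - 1) * Q$i > 0" using e(1) qi by simp
  ultimately have "e * Qt$i > 0" by (simp add: algebra_simps)
  then show ?thesis using e(1) by (simp add: zero_less_mult_iff)
qed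

theorem mainTheorem13:
  fixes P Qt :: "('t::finite,'x::finite,'y::finite) jdist"
  assumes "CARD('t) = 2" and "CARD('x) \<ge> 2" and "CARD('y) \<ge> 2"
    and "is_dist P"
    and "supp_DeltaP P = UNIV"
    and "Qt \<in> rel_interior (DeltaP P)"
    and "\<forall>Q\<in>DeltaP P. condH_T_XY Q \<le> condH_T_XY Qt"
    and "(UI_X P = 0 \<and> CARD('y) > 2) \<or> (UI_Y P = 0 \<and> CARD('x) > 2)"
  shows "\<exists>Q\<in>DeltaP P. Q \<noteq> Qt \<and> condH_T_XY Q = condH_T_XY Qt"
proof -
  have pos: "\<forall>i. Qt$i > 0" using full_support[OF assms(5,6)] by blast
  have QtD: "Qt \<in> DeltaP P" using assms(6) rel_interior_subset by blast
  show ?thesis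
  proof (cases "UI_X P = 0 \<and> CARD('y) > 2")
    case True
    then show ?thesis using coreA[OF assms(1,2) _ QtD pos assms(7)] by blast
  next
    case False
    then have ui: "UI_Y P = 0" and cx: "CARD('x) > 2" using assms(8) by auto
    have QtD': "sw Qt \<in> DeltaP (sw P)" using QtD sw_DeltaP by blast
    have pos': "\<forall>i. sw Qt $ i > 0"
    proof
      fix i :: "'t \<times> 'y \<times> 'x"
      obtain t y x where "i = (t,y,x)" by (cases i) auto
      then show "sw Qt $ i > 0" using pos by simp
    qed
    have max': "\<forall>Q\<in>DeltaP (sw P). condH_T_XY Q \<le> condH_T_XY (sw Qt)"
    proof
      fix Q assume "Q \<in> DeltaP (sw P)"
      then obtain Q0 where "Q0 \<in> DeltaP P" "Q = sw Q0" using DeltaP_sw_image by blast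
      then show "condH_T_XY Q \<le> condH_T_XY (sw Qt)" using assms(7) by simp
    qed
    obtain Q' where Q': "Q' \<in> DeltaP (sw P)" "Q' \<noteq> sw Qt" "condH_T_XY Q' = condH_T_XY (sw Qt)"
    proof -
      have "UI_X (sw P) = 0" using UI_sw[of P] ui by metis
      from coreA[OF assms(1,3) cx QtD' pos' max' this] show ?thesis using that by blast
    qed
    obtain Q0 where Q0: "Q0 \<in> DeltaP P" "Q' = sw Q0" using Q'(1) DeltaP_sw_image by blast
    have "Q0 \<noteq> Qt" using Q'(2) Q0(2) by auto
    moreover have "condH_T_XY Q0 = condH_T_XY Qt" using Q'(3) Q0(2) by simp
    ultimately show ?thesis using Q0(1) by blast
  qed
qed

end
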